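(* Let $t\geq 6$ with $t\equiv 2\pmod 4$, and let $c$ be a positive odd integer, written as $c=tk+d$ with $k\geq 0$ and $0\leq d<t$. Then the multiset $\{1,2^b,t^{c}\}$ admits a linear realization for every $b\geq t-1$ if $d\equiv 1\pmod 4$, and for every $b\geq t-2$ if $d\equiv 3\pmod 4$.
   Context: $\{1,2^b,t^{c}\}$ is the multiset with one $1$, $b$ copies of $2$ and $c$ copies of $t$. For a multiset $L$ of positive integers with $|L|=v-1$, each at most $v-1$, a linear realization of $L$ is a Hamiltonian path $[x_0,\dots,x_{v-1}]$ of the complete graph on $\{0,\dots,v-1\}$ such that the multiset $\{|x_i-x_{i+1}| : i=0,\dots,v-2\}$ equals $L$. *)

theory Defs
  imports Main "HOL-Library.Multiset"
begin

definition diff_mset :: "nat list \<Rightarrow> nat multiset" where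
  "diff_mset xs = mset (map (\<lambda>i. nat \<bar>int (xs ! i) - int (xs ! Suc i)\<bar>) [0..<length xs - 1])"

text \<open>A linear realization of the multiset L (with v = size L + 1 vertices) is a
Hamiltonian path [x_0,...,x_{v-1}] of the complete graph on {0,...,v-1}, i.e. an
ordering of {0,...,v-1}, whose multiset of edge lengths |x_i - x_{i+1}| equals L.\<close>
definition linear_realization :: "nat multiset \<Rightarrow> nat list \<Rightarrow> bool" where
  "linear_realization L xs \<longleftrightarrow>
     length xs = size L + 1 \<and> distinct xs \<and> set xs = {0..<size L + 1} \<and> diff_mset xs = L"

definition has_linear_realization :: "nat multiset \<Rightarrow> bool" where
  "has_linear_realization L \<longleftrightarrow> (\<exists>xs. linear_realization L xs)"

definition mset_12t :: "nat \<Rightarrow> nat \<Rightarrow> nat \<Rightarrow> nat multiset" where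
  "mset_12t b t c = {#1#} + replicate_mset b 2 + replicate_mset c t"

end

theory Submission
  imports Defs
begin

definition nd :: "nat \<Rightarrow> nat \<Rightarrow> nat" where
  "nd a b = (if a \<le> b then b - a else a - b)"

fun dl :: "nat list \<Rightarrow> nat multiset" where
  "dl [] = {#}"
| "dl [x] = {#}"
| "dl (x # y # zs) = add_mset (nd x y) (dl (y # zs))"

lemma nd_sym: "nd a b = nd b a" by (simp add: nd_def)

lemma nd_alt: "nat \<bar>int a - int b\<bar> = nd a b"
  by (cases "a \<le> b") (auto simp: nd_def)

lemma diff_mset_Cons2: "diff_mset (x # y # zs) = add_mset (nd x y) (diff_mset (y # zs))"
proof -
  have "[0..<length (x # y # zs) - 1] = 0 # map Suc [0..<length (y # zs) - 1]"
    by (simp only: length_Cons diff_Suc_1 upt_conv_Cons[OF zero_less_Suc] map_Suc_upt)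
  then show ?thesis
    unfolding diff_mset_def by (simp only: list.map mset.simps) (simp add: nd_alt o_def)
qed

lemma diff_mset_dl: "diff_mset xs = dl xs"
proof (induction xs rule: dl.induct)
  case 1 then show ?case by (simp add: diff_mset_def)
next
  case (2 x) then show ?case by (simp add: diff_mset_def)
next
  case (3 x y zs) then show ?case by (simp add: diff_mset_Cons2)
qed


lemma replicate_mset_add: "replicate_mset (m + n) x = replicate_mset m x + replicate_mset n x"
  by (induction m) auto

lemma nd_self[simp]: "nd a a = 0" by (simp add: nd_def)

lemma dl_Cons: "xs \<noteq> [] \<Longrightarrow> dl (x # xs) = add_mset (nd x (hd xs)) (dl xs)"
  by (cases xs) auto

lemma size_dl: "size (dl xs) = length xs - 1"
  by (induction xs rule: dl.induct) auto

lemma dl_append: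
  "xs \<noteq> [] \<Longrightarrow> ys \<noteq> [] \<Longrightarrow> dl (xs @ ys) = dl xs + dl ys + {#nd (last xs) (hd ys)#}"
proof (induction xs rule: dl.induct)
  case 1 then show ?case by simp
next
  case (2 x) then show ?case by (simp add: dl_Cons)
next
  case (3 x y zs) then show ?case by simp
qed

lemma dl_rev: "dl (rev xs) = dl xs"
proof (induction xs rule: dl.induct)
  case (3 x y zs)
  have "dl (rev (x # y # zs)) = dl (rev (y # zs) @ [x])" by simp
  also have "\<dots> = dl (rev (y#zs)) + {#nd y x#}"
    by (subst dl_append) (auto simp: last_rev)
  finally show ?case using 3 by (simp add: nd_sym)
qed auto

lemma dl_map:
  assumes "\<And>a b. a \<in> set xs \<Longrightarrow> b \<in> set xs \<Longrightarrow> nd (f a) (f b) = g (nd a b)"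
  shows "dl (map f xs) = image_mset g (dl xs)"
  using assms by (induction xs rule: dl.induct) auto

definition ap :: "nat \<Rightarrow> nat \<Rightarrow> nat \<Rightarrow> nat list" where
  "ap a s L = map (\<lambda>i. a + s * i) [0..<L]"

lemma ap_0[simp]: "ap a s 0 = []" by (simp add: ap_def)

lemma ap_Suc: "ap a s (Suc L) = a # ap (a + s) s L"
  unfolding ap_def by (simp add: upt_conv_Cons map_Suc_upt[symmetric] del: upt_Suc)

lemma length_ap[simp]: "length (ap a s L) = L" by (simp add: ap_def)

lemma ap_eq_Nil[simp]: "ap a s L = [] \<longleftrightarrow> L = 0" by (simp add: ap_def)

lemma hd_ap: "L > 0 \<Longrightarrow> hd (ap a s L) = a"
  by (cases L) (auto simp: ap_Suc)

lemma last_ap: "L > 0 \<Longrightarrow> last (ap a s L) = a + s * (L - 1)"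
  by (simp add: ap_def last_map)

lemma set_ap: "set (ap a s L) = {a + s * i | i. i < L}"
  by (auto simp: ap_def)

lemma distinct_ap: "s > 0 \<Longrightarrow> distinct (ap a s L)"
  by (auto simp: ap_def distinct_map inj_on_def)

lemma dl_ap: "dl (ap a s L) = replicate_mset (L - 1) s"
proof (induction L arbitrary: a)
  case 0 then show ?case by simp
next
  case (Suc L)
  show ?case
  proof (cases L)
    case 0 then show ?thesis by (simp add: ap_Suc)
  next
    case (Suc L')
    then show ?thesis using Suc.IH[of "a+s"]
      by (simp add: ap_Suc nd_def)
  qed
qed

lemma dl_upt: "dl [a..<b] = replicate_mset (b - a - 1) 1"
proof (induction b)
  case 0 then show ?case by simp
next
  case (Suc b)
  show ?case
  proof (cases "a < b")
    case True
    then have "[a..<Suc b] = [a..<b] @ [b]" by simp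
    moreover have "dl ([a..<b] @ [b]) = dl [a..<b] + {#1#}"
      using True by (subst dl_append) (auto simp: nd_def)
    ultimately show ?thesis using Suc True
      by (simp add: Suc_diff_Suc) (metis Suc_diff_Suc diff_Suc_1 replicate_mset_Suc add_mset_add_single)
  next
    case False
    then show ?thesis by (cases "a = b") auto
  qed
qed

fun schain :: "nat list list \<Rightarrow> bool" where
  "schain [] = True"
| "schain [g] = True"
| "schain (g # h # r) = (nd (last g) (hd h) = 1 \<and> schain (h # r))"

lemma dl_concat:
  assumes "schain gs" "\<forall>g\<in>set gs. g \<noteq> []"
  shows "dl (concat gs) = sum_list (map dl gs) + replicate_mset (length gs - 1) 1"
  using assms
proof (induction gs rule: schain.induct)
  case 1 then show ?case by simp
next
  case (2 g) then show ?case by simp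
next
  case (3 g h r)
  have ne: "concat (h # r) \<noteq> []" using 3 by simp
  have hd: "hd (concat (h # r)) = hd h" using 3 by simp
  have "dl (concat (g # h # r)) = dl g + dl (concat (h # r)) + {#nd (last g) (hd h)#}"
    using 3 ne hd by (simp add: dl_append[of g "concat (h # r)", simplified])
  then show ?case using 3 by simp
qed

lemma chain_append:
  "schain xs \<Longrightarrow> schain ys \<Longrightarrow> (xs \<noteq> [] \<Longrightarrow> ys \<noteq> [] \<Longrightarrow> nd (last (last xs)) (hd (hd ys)) = 1)
   \<Longrightarrow> schain (xs @ ys)"
proof (induction xs rule: schain.induct)
  case (2 g) then show ?case by (cases ys) auto
qed auto

lemma chain_map_upt:
  "(\<And>j. a \<le> j \<Longrightarrow> Suc j < b \<Longrightarrow> nd (last (f j)) (hd (f (Suc j))) = 1) \<Longrightarrow> schain (map f [a..<b])"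
proof (induction b)
  case 0 then show ?case by simp
next
  case (Suc b)
  show ?case
  proof (cases "a < b")
    case True
    have "map f [a..<Suc b] = map f [a..<b] @ [f b]" using True by simp
    moreover have "schain (map f [a..<b])" using Suc by auto
    moreover have "nd (last (f (b - 1))) (hd (f b)) = 1"
      using Suc.prems[of "b - 1"] True by simp
    ultimately show ?thesis using True
      by (auto intro!: chain_append simp: last_map)
  next
    case False
    then show ?thesis by (cases "a = b") auto
  qed
qed

definition seglist :: "nat \<Rightarrow> nat list list \<Rightarrow> bool" where
  "seglist s gs \<longleftrightarrow> (\<forall>g\<in>set gs. g \<noteq> [] \<and> dl g = replicate_mset (length g - 1) s)"

lemma sum_dl_seglist:
  "seglist s gs \<Longrightarrow> sum_list (map dl gs) = replicate_mset (length (concat gs) - length gs) s"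
proof (induction gs)
  case Nil then show ?case by simp
next
  case (Cons g gs)
  then have g: "g \<noteq> []" "dl g = replicate_mset (length g - 1) s" and r: "seglist s gs"
    by (auto simp: seglist_def)
  have len: "length (concat gs) \<ge> length gs"
    using r
  proof (induction gs)
    case (Cons a gs)
    then have "a \<noteq> []" "seglist s gs" by (auto simp: seglist_def)
    then have "length a \<ge> 1" by (cases a) auto
    then show ?case using Cons.IH[OF \<open>seglist s gs\<close>] by simp
  qed simp
  have "length g - 1 + (length (concat gs) - length gs) = length (concat (g # gs)) - length (g # gs)"
    using g len by (cases g) auto
  then show ?case using Cons.IH[OF r] g by (simp add: replicate_mset_add[symmetric])
qed

lemma dl_concat_seg:
  assumes "schain gs" "seglist s gs"
  shows "dl (concat gs) = replicate_mset (length (concat gs) - length gs) s + replicate_mset (length gs - 1) 1"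
  using dl_concat[OF assms(1)] sum_dl_seglist[OF assms(2)] assms(2) by (auto simp: seglist_def)

lemma seglist_append: "seglist s (xs @ ys) \<longleftrightarrow> seglist s xs \<and> seglist s ys"
  by (auto simp: seglist_def)

lemma seglist_Cons: "seglist s (x # ys) \<longleftrightarrow> x \<noteq> [] \<and> dl x = replicate_mset (length x - 1) s \<and> seglist s ys"
  by (auto simp: seglist_def)

lemma seg_ap: "L > 0 \<Longrightarrow> ap a s L \<noteq> [] \<and> dl (ap a s L) = replicate_mset (length (ap a s L) - 1) s"
  by (simp add: dl_ap)

lemma seg_rev_ap: "L > 0 \<Longrightarrow> rev (ap a s L) \<noteq> [] \<and> dl (rev (ap a s L)) = replicate_mset (length (rev (ap a s L)) - 1) s"
  by (simp add: dl_ap dl_rev)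

definition clen :: "nat \<Rightarrow> nat \<Rightarrow> nat \<Rightarrow> nat" where
  "clen q r j = (if j < r then Suc q else q)"

definition col :: "nat \<Rightarrow> nat \<Rightarrow> nat \<Rightarrow> nat \<Rightarrow> nat list" where
  "col q s r j = ap j s (clen q r j)"

definition cs :: "nat \<Rightarrow> nat \<Rightarrow> nat \<Rightarrow> nat \<Rightarrow> bool \<Rightarrow> nat list" where
  "cs q s r j u = (if u then col q s r j else rev (col q s r j))"

definition ctop :: "nat \<Rightarrow> nat \<Rightarrow> nat \<Rightarrow> nat \<Rightarrow> nat" where
  "ctop q s r j = (if j < r then j + s * q else j + s * q - s)"

lemma clen_pos: "q > 0 \<Longrightarrow> clen q r j > 0" by (simp add: clen_def)

lemma col_ne: "q > 0 \<Longrightarrow> col q s r j \<noteq> []" by (simp add: col_def clen_def)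

lemma hd_col: "q > 0 \<Longrightarrow> hd (col q s r j) = j" by (simp add: col_def hd_ap clen_pos)

lemma last_col: "q > 0 \<Longrightarrow> last (col q s r j) = ctop q s r j"
proof -
  assume q: "q > 0"
  then have "s * (q - 1) = s * q - s" by (simp add: diff_mult_distrib2)
  moreover have "s * q \<ge> s" using q by simp
  ultimately show ?thesis using q by (auto simp: col_def last_ap clen_pos ctop_def clen_def)
qed

lemma hd_cs: "q > 0 \<Longrightarrow> hd (cs q s r j u) = (if u then j else ctop q s r j)"
  by (simp add: cs_def hd_col hd_rev last_col)

lemma last_cs: "q > 0 \<Longrightarrow> last (cs q s r j u) = (if u then ctop q s r j else j)"
  by (simp add: cs_def last_col last_rev hd_col)

lemma cs_ne: "q > 0 \<Longrightarrow> cs q s r j u \<noteq> []" by (simp add: cs_def col_ne)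

lemma mset_cs: "mset (cs q s r j u) = mset (col q s r j)" by (simp add: cs_def)

lemma length_col: "length (col q s r j) = clen q r j" by (simp add: col_def)

lemma seg_cs: "q > 0 \<Longrightarrow> cs q s r j u \<noteq> [] \<and> dl (cs q s r j u) = replicate_mset (length (cs q s r j u) - 1) s"
  by (simp add: cs_def col_def dl_ap dl_rev clen_pos)

lemma in_col:
  assumes "j < s" "r < s"
  shows "x \<in> set (col q s r j) \<longleftrightarrow> x < q * s + r \<and> x mod s = j"
proof
  assume "x \<in> set (col q s r j)"
  then obtain i where i: "i < clen q r j" "x = j + s * i" by (auto simp: col_def set_ap)
  have "x mod s = j" using i assms by simp
  moreover have "x < q * s + r"
  proof (cases "j < r")
    case True
    then have "i \<le> q" using i by (simp add: clen_def)
    then have a: "i * s \<le> q * s" by (rule mult_le_mono1)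
    have b: "x = j + i * s" using i by (simp add: mult.commute)
    show ?thesis using a b True by linarith
  next
    case False
    then have "Suc i \<le> q" using i by (simp add: clen_def)
    then have "s * Suc i \<le> s * q" by (rule mult_le_mono2)
    then show ?thesis using i assms by (simp add: mult.commute)
  qed
  ultimately show "x < q * s + r \<and> x mod s = j" by simp
next
  assume h: "x < q * s + r \<and> x mod s = j"
  define i where "i = x div s"
  have x: "x = j + s * i" using h div_mult_mod_eq[of x s] by (simp add: i_def mult.commute)
  have "i < clen q r j"
  proof (cases "i < q")
    case True then show ?thesis by (simp add: clen_def)
  next
    case False
    then have a: "q * s \<le> i * s" by (intro mult_le_mono1) simp
    have b: "x = j + i * s" using x by (simp add: mult.commute)
    have jr: "j < r" using a b h by linarith
    have "i * s < Suc q * s" using h b assms by simp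
    then have "i < Suc q" by (rule mult_less_cancel2[THEN iffD1, THEN conjunct2])
    then show ?thesis using jr by (simp add: clen_def)
  qed
  then show "x \<in> set (col q s r j)" using x by (auto simp: col_def set_ap)
qed

lemma distinct_col: "s > 0 \<Longrightarrow> distinct (col q s r j)" by (simp add: col_def distinct_ap)

lemma count_sum_list: "count (sum_list ms) x = sum_list (map (\<lambda>m. count m x) ms)"
  by (induction ms) auto

lemma sum_cols:
  assumes "r < s"
  shows "sum_list (map (\<lambda>j. mset (col q s r j)) [0..<s]) = mset [0..<q * s + r]"
proof (rule multiset_eqI)
  fix x
  have s: "s > 0" using assms by simp
  have c: "count (mset (col q s r j)) x = (if x < q * s + r \<and> x mod s = j then 1 else 0)" if "j < s" for j
    using in_col[OF that assms, of x] distinct_col[OF s, of q r j]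
    by (simp add: distinct_count_atmost_1)
  have "count (sum_list (map (\<lambda>j. mset (col q s r j)) [0..<s])) x
      = sum (\<lambda>j. count (mset (col q s r j)) x) {0..<s}"
    by (simp add: count_sum_list o_def interv_sum_list_conv_sum_set_nat count_sum)
  also have "\<dots> = sum (\<lambda>j. if x < q * s + r \<and> x mod s = j then 1 else 0) {0..<s}"
    by (rule sum.cong) (auto simp: c)
  also have "\<dots> = (if x < q * s + r then 1 else 0)"
  proof (cases "x < q * s + r")
    case True
    have "sum (\<lambda>j. if x mod s = j then 1 else 0) {0..<s} = (1::nat)"
      using s by (simp add: sum.delta)
    then show ?thesis using True by simp
  qed simp
  finally show "count (sum_list (map (\<lambda>j. mset (col q s r j)) [0..<s])) x = count (mset [0..<q * s + r]) x"
    by simp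
qed

lemma bous_mset:
  assumes "mset js = mset [0..<s]" "r < s"
  shows "mset (concat (map (\<lambda>j. cs q s r j (u j)) js)) = mset [0..<q * s + r]"
proof -
  have "mset (concat (map (\<lambda>j. cs q s r j (u j)) js)) = sum_list (map (\<lambda>j. mset (col q s r j)) js)"
    by (simp add: mset_concat o_def mset_cs)
  also have "\<dots> = sum_mset (image_mset (\<lambda>j. mset (col q s r j)) (mset js))"
    by (metis mset_map sum_mset_sum_list)
  also have "\<dots> = sum_list (map (\<lambda>j. mset (col q s r j)) [0..<s])"
    by (metis assms(1) mset_map sum_mset_sum_list)
  finally show ?thesis using sum_cols[OF assms(2)] by simp
qed

lemma mset_upt_props:
  assumes "mset xs = mset [0..<N]"
  shows "distinct xs" "set xs = {0..<N}" "length xs = N"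
  using assms mset_eq_imp_distinct_iff[OF assms] 
    apply simp
   apply (metis atLeastLessThan_upt mset_eq_setD assms)
  by (metis assms length_upt minus_nat.diff_0 size_mset)

definition cls :: "nat \<Rightarrow> nat \<Rightarrow> nat list \<Rightarrow> nat \<Rightarrow> nat \<Rightarrow> bool" where
  "cls s n p x y \<longleftrightarrow> distinct p \<and> set p = {0..<n} \<and> dl p = replicate_mset x 1 + replicate_mset y s"

lemma cls_length: "cls s n p x y \<Longrightarrow> length p = n"
  unfolding cls_def by (metis atLeastLessThan_upt distinct_card distinct_upt length_upt minus_nat.diff_0 set_upt)

lemma cls_count: "cls s n p x y \<Longrightarrow> x + y = n - 1"
  using cls_length[of s n p x y] size_dl[of p] unfolding cls_def by simp

lemma cls_of_segs:
  assumes "schain gs" "seglist s gs" "mset (concat gs) = mset [0..<N]"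
  shows "cls s N (concat gs) (length gs - 1) (N - length gs)"
proof -
  note m = mset_upt_props[OF assms(3)]
  show ?thesis unfolding cls_def
    using m dl_concat_seg[OF assms(1,2)] by (simp add: add.commute)
qed

lemma seglist_cs_map: "q > 0 \<Longrightarrow> seglist s (map (\<lambda>j. cs q s r (f j) (u j)) js)"
  by (auto simp: seglist_def seg_cs)

lemma sq_ge: "(q::nat) > 0 \<Longrightarrow> s * q \<ge> s" using mult_le_mono2[of "1::nat" q s] by simp

lemma top_lt: "j < r \<Longrightarrow> ctop q s r j = j + s * q" by (simp add: ctop_def)
lemma top_ge: "\<not> j < r \<Longrightarrow> ctop q s r j = j + s * q - s" by (simp add: ctop_def)

lemma nd_top_Suc:
  assumes "q > 0" "Suc j \<noteq> r"
  shows "nd (ctop q s r j) (ctop q s r (Suc j)) = 1"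
proof -
  have m: "s * q \<ge> s" using sq_ge[OF assms(1)] .
  show ?thesis
  proof (cases "j < r")
    case True
    then have "Suc j < r" using assms by simp
    then show ?thesis using True by (simp add: top_lt nd_def)
  next
    case False
    then have "\<not> Suc j < r" by simp
    have "ctop q s r (Suc j) = ctop q s r j + 1"
      unfolding top_ge[OF False] top_ge[OF \<open>\<not> Suc j < r\<close>] using m by arith
    then show ?thesis by (simp add: nd_def)
  qed
qed

lemma hd_concat_map: "f x \<noteq> [] \<Longrightarrow> hd (concat (map f (x # xs))) = hd (f x)" by simp
lemma last_concat_map: "f x \<noteq> [] \<Longrightarrow> last (concat (map f (xs @ [x]))) = last (f x)" by simp

lemma nd_Suc[simp]: "nd j (Suc j) = 1" "nd (Suc j) j = 1" by (simp_all add: nd_def)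

definition B :: "nat \<Rightarrow> nat \<Rightarrow> nat \<Rightarrow> nat list" where
  "B q s r = concat (map (\<lambda>j. cs q s r j (even j)) [0..<s])"

lemma B_props:
  assumes q: "q > 0" and r: "r < s" "even r" and s: "odd s"
  shows "cls s (q * s + r) (B q s r) (s - 1) (q * s + r - s)"
    "hd (B q s r) = 0" "last (B q s r) = s * q - 1"
proof -
  let ?gs = "map (\<lambda>j. cs q s r j (even j)) [0..<s]"
  have ch: "schain ?gs"
  proof (rule chain_map_upt)
    fix j assume j: "0 \<le> j" "Suc j < s"
    show "nd (last (cs q s r j (even j))) (hd (cs q s r (Suc j) (even (Suc j)))) = 1"
    proof (cases "even j")
      case True
      then have "Suc j \<noteq> r" using r by auto
      then show ?thesis using True q by (simp add: last_cs hd_cs nd_top_Suc)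
    next
      case False
      then show ?thesis using q by (simp add: last_cs hd_cs)
    qed
  qed
  have sg: "seglist s ?gs" using seglist_cs_map[OF q, of s r id] by simp
  have ms: "mset (concat ?gs) = mset [0..<q * s + r]"
    using bous_mset[of "[0..<s]" s r q even] r by simp
  show "cls s (q * s + r) (B q s r) (s - 1) (q * s + r - s)"
    using cls_of_segs[OF ch sg ms] unfolding B_def by simp
  have s0: "s > 0" using r by simp
  have u: "[0..<s] = 0 # [1..<s]" using s0 upt_conv_Cons by auto
  show "hd (B q s r) = 0" unfolding B_def u
    by (simp only: list.map concat.simps hd_append2[OF cs_ne[OF q]] hd_cs[OF q] even_zero if_True)
  have u2: "[0..<s] = [0..<s - 1] @ [s - 1]" using s0 by (cases s) simp_all
  have ev: "even (s - 1)" using s s0 by simp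
  have "\<not> s - 1 < r" using r by simp
  have "last (B q s r) = ctop q s r (s - 1)" unfolding B_def u2
    by (simp only: map_append list.map concat_append concat.simps append_Nil2
        last_appendR[OF cs_ne[OF q]] last_cs[OF q] ev if_True)
  also have "\<dots> = s * q - 1" using top_ge[OF \<open>\<not> s - 1 < r\<close>] sq_ge[OF q, of s] s0 by arith
  finally show "last (B q s r) = s * q - 1" .
qed


lemma hd_concat_gen: "gs \<noteq> [] \<Longrightarrow> hd gs \<noteq> [] \<Longrightarrow> hd (concat gs) = hd (hd gs)"
  by (cases gs) auto

lemma last_concat_gen: "gs \<noteq> [] \<Longrightarrow> last gs \<noteq> [] \<Longrightarrow> last (concat gs) = last (last gs)"
  by (induction gs rule: rev_induct) auto

lemma chain_map_rev_upt:
  "(\<And>j. a \<le> j \<Longrightarrow> Suc j < b \<Longrightarrow> nd (last (f (Suc j))) (hd (f j)) = 1) \<Longrightarrow> schain (map f (rev [a..<b]))"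
proof (induction b)
  case 0 then show ?case by simp
next
  case (Suc b)
  show ?case
  proof (cases "a < b")
    case True
    have e: "rev [a..<Suc b] = b # rev [a..<b]" using True by simp
    obtain b' where b': "b = Suc b'" using True by (cases b) auto
    have r: "rev [a..<b] = (b - 1) # rev [a..<b - 1]" using True b' by simp
    have c: "schain (map f (rev [a..<b]))" using Suc by auto
    have l: "nd (last (f b)) (hd (f (b - 1))) = 1"
      using Suc.prems[of "b - 1"] True by simp
    show ?thesis unfolding e using c l r by simp
  next
    case False
    then show ?thesis by (cases "a = b") auto
  qed
qed

lemma mset_concat_cs: "mset (concat (map (\<lambda>j. cs q s r j (u j)) js)) = sum_list (map (\<lambda>j. mset (col q s r j)) js)"
  by (simp add: mset_concat o_def mset_cs)

lemma cols_mset: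
  assumes "mset js = mset [0..<s]" "r < s"
  shows "sum_list (map (\<lambda>j. mset (col q s r j)) js) = mset [0..<q * s + r]"
  using bous_mset[OF assms, of q "\<lambda>_. True"] by (simp add: mset_concat_cs)

lemma reflect_cls:
  assumes "cls s N p x y"
  shows "cls s N (rev (map (\<lambda>z. N - 1 - z) p)) x y"
proof -
  have d: "distinct p" and st: "set p = {0..<N}" and dlp: "dl p = replicate_mset x 1 + replicate_mset y s"
    using assms by (auto simp: cls_def)
  have inj: "inj_on (\<lambda>z. N - 1 - z) {0..<N}" by (auto simp: inj_on_def)
  have "distinct (map (\<lambda>z. N - 1 - z) p)" using d inj st by (simp add: distinct_map)
  moreover have "(\<lambda>z. N - 1 - z) ` {0..<N} = {0..<N}"
  proof
    show "(\<lambda>z. N - 1 - z) ` {0..<N} \<subseteq> {0..<N}" by auto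
    show "{0..<N} \<subseteq> (\<lambda>z. N - 1 - z) ` {0..<N}"
    proof
      fix z assume "z \<in> {0..<N}"
      then have "z = N - 1 - (N - 1 - z)" "N - 1 - z \<in> {0..<N}" by auto
      then show "z \<in> (\<lambda>z. N - 1 - z) ` {0..<N}" by blast
    qed
  qed
  moreover have "dl (map (\<lambda>z. N - 1 - z) p) = image_mset id (dl p)"
    by (rule dl_map) (use st in \<open>auto simp: nd_def\<close>)
  ultimately show ?thesis using st dlp by (simp add: cls_def dl_rev)
qed

definition TE :: "nat \<Rightarrow> nat \<Rightarrow> nat \<Rightarrow> nat list" where
  "TE q s r = rev (map (\<lambda>z. q * s + r - 1 - z) (B q s r))"

lemma TE_props:
  assumes q: "q > 0" and r: "r < s" "even r" and s: "odd s"
  shows "cls s (q * s + r) (TE q s r) (s - 1) (q * s + r - s)"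
    "last (TE q s r) = q * s + r - 1" "TE q s r \<noteq> []"
proof -
  note b = B_props[OF assms]
  show "cls s (q * s + r) (TE q s r) (s - 1) (q * s + r - s)"
    unfolding TE_def by (rule reflect_cls[OF b(1)])
  have ne: "B q s r \<noteq> []" using cls_length[OF b(1)] q r
    by (metis add_is_0 le_zero_eq length_0_conv mult_is_0 nat_less_le sq_ge neq0_conv)
  show "last (TE q s r) = q * s + r - 1" unfolding TE_def using b(2) ne
    by (simp add: last_rev hd_map)
  show "TE q s r \<noteq> []" unfolding TE_def using ne by simp
qed

definition T1 :: "nat \<Rightarrow> nat \<Rightarrow> nat list" where
  "T1 q s = concat (map (\<lambda>j. cs q s 1 j (even j)) (rev [0..<s]))"

lemma T1_props:
  assumes q: "q > 0" and s: "odd s" "s > 1"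
  shows "cls s (q * s + 1) (T1 q s) (s - 1) (q * s + 1 - s)"
    "last (T1 q s) = q * s"
proof -
  let ?gs = "map (\<lambda>j. cs q s 1 j (even j)) (rev [0..<s])"
  have ch: "schain ?gs"
  proof (rule chain_map_rev_upt)
    fix j assume j: "0 \<le> j" "Suc j < s"
    show "nd (last (cs q s 1 (Suc j) (even (Suc j)))) (hd (cs q s 1 j (even j))) = 1"
    proof (cases "even j")
      case True
      then show ?thesis using q by (simp add: last_cs hd_cs)
    next
      case False
      then have "j \<ge> 1" by (cases j) auto
      then have t1: "ctop q s 1 (Suc j) = Suc j + s * q - s" "ctop q s 1 j = j + s * q - s"
        by (auto simp: ctop_def)
      have "ctop q s 1 (Suc j) = ctop q s 1 j + 1"
        unfolding t1 using sq_ge[OF q, of s] by arith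
      then show ?thesis using False q by (simp add: last_cs hd_cs nd_def)
    qed
  qed
  have sg: "seglist s ?gs" using seglist_cs_map[OF q, of s 1 id] by simp
  have ms: "mset (concat ?gs) = mset [0..<q * s + 1]"
    using bous_mset[of "rev [0..<s]" s 1 q even] s by simp
  show "cls s (q * s + 1) (T1 q s) (s - 1) (q * s + 1 - s)"
    using cls_of_segs[OF ch sg ms] unfolding T1_def by simp
  have s0: "s > 0" using s by simp
  have "last (T1 q s) = last (cs q s 1 0 (even 0))" unfolding T1_def
    using s0 cs_ne[OF q] by (simp add: last_concat_gen last_map last_rev)
  then show "last (T1 q s) = q * s" using q by (simp add: last_cs ctop_def mult.commute)
qed

lemma top_long: "j < r \<Longrightarrow> ctop q s r j = j + s * q" by (simp add: ctop_def)
lemma top_short: "\<not> j < r \<Longrightarrow> ctop q s r j = j + s * q - s" by (simp add: ctop_def)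

lemma chain3: "schain [a, b, c] \<longleftrightarrow> nd (last a) (hd b) = 1 \<and> nd (last b) (hd c) = 1" by simp

lemma mset_col_long: "j < r \<Longrightarrow> mset (col q s r j) = add_mset j (mset (ap (j + s) s q))"
  by (simp add: col_def clen_def ap_Suc)

lemma seglist_last_ne: "seglist s gs \<Longrightarrow> gs \<noteq> [] \<Longrightarrow> last gs \<noteq> []"
  unfolding seglist_def using last_in_set by blast

lemma seglist_hd_ne: "seglist s gs \<Longrightarrow> gs \<noteq> [] \<Longrightarrow> hd gs \<noteq> []"
  unfolding seglist_def using hd_in_set by blast

definition G1e_segs :: "nat \<Rightarrow> nat \<Rightarrow> nat \<Rightarrow> nat list list" where
  "G1e_segs q s j = [ap (j + s) s q, cs q s (j + 3) (j + 1) False, [j]]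
     @ map (\<lambda>i. cs q s (j + 3) i (even i)) (rev [0..<j])
     @ map (\<lambda>i. cs q s (j + 3) i (odd i)) (rev [j + 2..<s])"

definition G1e :: "nat \<Rightarrow> nat \<Rightarrow> nat \<Rightarrow> nat list" where
  "G1e q s j = concat (G1e_segs q s j)"

lemma G1e_props:
  assumes q: "q > 0" and j: "odd j" "j + 3 < s" and s: "odd s"
  shows "cls s (q * s + (j + 3)) (G1e q s j) s (q * s + (j + 3) - s - 1)"
    "last (G1e q s j) = q * s + (j + 3) - 1"
proof -
  let ?r = "j + 3"
  let ?A = "map (\<lambda>i. cs q s ?r i (even i)) (rev [0..<j])"
  let ?C = "map (\<lambda>i. cs q s ?r i (odd i)) (rev [j + 2..<s])"
  let ?H = "[ap (j + s) s q, cs q s ?r (j + 1) False, [j]]"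
  have j1: "j \<ge> 1" using j by (cases j) auto
  have m: "s * q \<ge> s" using sq_ge[OF q] .
  have hA: "?A \<noteq> []" "hd (hd ?A) = j - 1"
  proof -
    have "rev [0..<j] = (j - 1) # rev [0..<j - 1]" using j1 by (cases j) auto
    moreover have "even (j - 1)" using j j1 by simp
    ultimately show "?A \<noteq> []" "hd (hd ?A) = j - 1" using q by (simp_all add: hd_cs)
  qed
  have lA: "last (last ?A) = s * q"
  proof -
    have "last (rev [0..<j]) = 0" using j1 by (simp add: last_rev)
    then have "last ?A = cs q s ?r 0 (even 0)" using hA(1) by (simp add: last_map)
    then show ?thesis using q by (simp add: last_cs top_long)
  qed
  have ss: "s \<ge> j + 4" using j s by presburger
  have hC: "?C \<noteq> []" "hd (hd ?C) = s * q - 1"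
  proof -
    have "rev [j + 2..<s] = (s - 1) # rev [j + 2..<s - 1]" using ss by (cases s) auto
    moreover have "even (s - 1)" using s by simp
    moreover have "ctop q s ?r (s - 1) = s * q - 1" using ss m by (simp add: top_short)
    ultimately show "?C \<noteq> []" "hd (hd ?C) = s * q - 1" using q by (simp_all add: hd_cs)
  qed
  have lC: "last (last ?C) = q * s + ?r - 1"
  proof -
    have "last (rev [j + 2..<s]) = j + 2" using ss by (simp add: last_rev)
    then have "last ?C = cs q s ?r (j + 2) (odd (j + 2))" using hC(1) by (simp add: last_map)
    moreover have "odd (j + 2)" using j by simp
    ultimately show ?thesis using q by (simp add: last_cs top_long mult.commute)
  qed
  have chH: "schain ?H"
  proof -
    have "last (ap (j + s) s q) = j + s * q"
    proof -
      have "s + s * (q - 1) = s * q" using q by (cases q) auto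
      then show ?thesis using q by (simp add: last_ap)
    qed
    moreover have "hd (cs q s ?r (j + 1) False) = j + 1 + s * q" using q by (simp add: hd_cs top_long)
    moreover have "last (cs q s ?r (j + 1) False) = j + 1" using q by (simp add: last_cs)
    ultimately show ?thesis by (simp add: nd_def)
  qed
  have chA: "schain ?A"
  proof (rule chain_map_rev_upt)
    fix i assume i: "0 \<le> i" "Suc i < j"
    show "nd (last (cs q s ?r (Suc i) (even (Suc i)))) (hd (cs q s ?r i (even i))) = 1"
    proof (cases "even i")
      case True then show ?thesis using q by (simp add: last_cs hd_cs)
    next
      case False
      have "ctop q s ?r (Suc i) = ctop q s ?r i + 1" using i by (simp add: top_long)
      then show ?thesis using False q by (simp add: last_cs hd_cs nd_def)
    qed
  qed
  have chC: "schain ?C"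
  proof (rule chain_map_rev_upt)
    fix i assume i: "j + 2 \<le> i" "Suc i < s"
    show "nd (last (cs q s ?r (Suc i) (odd (Suc i)))) (hd (cs q s ?r i (odd i))) = 1"
    proof (cases "even i")
      case True
      then have "i \<noteq> j + 2" using j by auto
      then have t: "ctop q s ?r (Suc i) = Suc i + s * q - s" "ctop q s ?r i = i + s * q - s"
        using i by (auto simp: top_short)
      have "ctop q s ?r (Suc i) = ctop q s ?r i + 1" unfolding t using m by arith
      then show ?thesis using True q by (simp add: last_cs hd_cs nd_def)
    next
      case False then show ?thesis using q by (simp add: last_cs hd_cs)
    qed
  qed
  have chHA: "schain (?H @ ?A)"
    by (rule chain_append[OF chH chA]) (use hA q in \<open>simp add: nd_def\<close>)
  have chall: "schain (?H @ ?A @ ?C)"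
  proof -
    have "schain ((?H @ ?A) @ ?C)"
    proof (rule chain_append[OF chHA chC])
      have sqpos: "s * q > 0" using ss q by simp
      have "nd (s * q) (s * q - 1) = 1" using sqpos by (cases "s * q") (auto simp: nd_def)
      then show "nd (last (last (?H @ ?A))) (hd (hd ?C)) = 1" using hA lA hC by simp
    qed
    then show ?thesis by simp
  qed
  have sg: "seglist s (?H @ ?A @ ?C)"
    using q seglist_cs_map[OF q, of s ?r id] by (simp add: seglist_append seglist_Cons seg_ap seg_cs dl_ap)
  have js: "mset (j # (j + 1) # rev [0..<j] @ rev [j + 2..<s]) = mset [0..<s]"
  proof -
    have "[0..<j + (s - j)] = [0..<j] @ [j..<j + (s - j)]" by (rule upt_add_eq_append) simp
    then have "[0..<s] = [0..<j] @ [j..<s]" using ss by simp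
    moreover have "[j..<s] = j # (j + 1) # [j + 2..<s]" using ss by (simp add: upt_conv_Cons)
    ultimately show ?thesis by simp
  qed
  have ms: "mset (concat (?H @ ?A @ ?C)) = mset [0..<q * s + ?r]"
  proof -
    have "mset (concat (?H @ ?A @ ?C)) = mset (col q s ?r j) + mset (col q s ?r (j + 1))
       + sum_list (map (\<lambda>i. mset (col q s ?r i)) (rev [0..<j]))
       + sum_list (map (\<lambda>i. mset (col q s ?r i)) (rev [j + 2..<s]))"
      by (simp add: mset_concat_cs mset_col_long mset_cs)
    also have "\<dots> = sum_list (map (\<lambda>i. mset (col q s ?r i)) (j # (j + 1) # rev [0..<j] @ rev [j + 2..<s]))"
      by (simp add: add.assoc)
    also have "\<dots> = mset [0..<q * s + ?r]" by (rule cols_mset[OF js]) (use j in simp)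
    finally show ?thesis .
  qed
  have len: "length (?H @ ?A @ ?C) = s + 1" using ss by simp
  have c: "cls s (q * s + ?r) (concat (?H @ ?A @ ?C)) (length (?H @ ?A @ ?C) - 1) (q * s + ?r - length (?H @ ?A @ ?C))"
    by (rule cls_of_segs[OF chall sg ms])
  show "cls s (q * s + ?r) (G1e q s j) s (q * s + ?r - s - 1)"
    using c unfolding G1e_def G1e_segs_def len by simp
  have lne: "last (?H @ ?A @ ?C) \<noteq> []"
    by (rule seglist_last_ne[OF sg]) simp
  have "last (G1e q s j) = last (last (?H @ ?A @ ?C))" unfolding G1e_def G1e_segs_def
    by (rule last_concat_gen[OF _ lne]) simp
  also have "\<dots> = last (last ?C)" using hC(1) by simp
  finally show "last (G1e q s j) = q * s + ?r - 1" using lC by simp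
qed

lemma cls_append_run:
  assumes c: "cls s N p x y" and l: "last p = N - 1" and N: "N > 0" "N \<le> n"
  shows "cls s n (p @ [N..<n]) (x + (n - N)) y" "last (p @ [N..<n]) = n - 1" "p @ [N..<n] \<noteq> []"
proof -
  have d: "distinct p" and st: "set p = {0..<N}" and dlp: "dl p = replicate_mset x 1 + replicate_mset y s"
    using c by (auto simp: cls_def)
  have pne: "p \<noteq> []" using st N by auto
  show "p @ [N..<n] \<noteq> []" using pne by simp
  show "last (p @ [N..<n]) = n - 1"
  proof (cases "N < n")
    case True then show ?thesis by simp
  next
    case False then have "n = N" using N by simp
    then show ?thesis using l by simp
  qed
  have dist: "distinct (p @ [N..<n])" using d st by auto
  have set: "set (p @ [N..<n]) = {0..<n}" using st N by auto
  have "dl (p @ [N..<n]) = replicate_mset (x + (n - N)) 1 + replicate_mset y s"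
  proof (cases "N < n")
    case True
    have "dl (p @ [N..<n]) = dl p + dl [N..<n] + {#nd (last p) (hd [N..<n])#}"
      by (rule dl_append) (use pne True in auto)
    also have "\<dots> = dl p + replicate_mset (n - N - 1) 1 + {#1#}"
      using l N True by (simp add: dl_upt nd_def)
    also have "\<dots> = replicate_mset (x + (n - N)) 1 + replicate_mset y s"
    proof -
      have e: "x + (n - N) = x + (n - N - 1) + 1" using True by simp
      show ?thesis unfolding e replicate_mset_add dlp by (simp add: ac_simps)
    qed
    finally show ?thesis .
  next
    case False then have "n = N" using N by simp
    then show ?thesis using dlp by simp
  qed
  then show "cls s n (p @ [N..<n]) (x + (n - N)) y" using dist set by (simp add: cls_def)
qed

lemma topend:
  assumes s: "odd s" "s \<ge> 3" and n: "n \<ge> s + \<sigma>"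
    and good: "\<sigma> \<ge> 1 \<or> even ((n - \<sigma>) mod s) \<or> (n - \<sigma>) mod s = 1"
  shows "\<exists>p. cls s n p (s - 1 + \<sigma>) (n - s - \<sigma>) \<and> p \<noteq> [] \<and> last p = n - 1"
proof -
  define N where "N = n - \<sigma>"
  define q where "q = N div s"
  define r where "r = N mod s"
  have s0: "s > 0" using s by simp
  have Nq: "N = q * s + r" unfolding q_def r_def by simp
  have rs: "r < s" unfolding r_def using s0 by simp
  have q0: "q > 0" unfolding q_def using n s0 N_def by (simp add: div_greater_zero_iff)
  have Nn: "N \<le> n" "N > 0" using n s unfolding N_def by auto
  show ?thesis
  proof (cases "even r")
    case True
    note t = TE_props[OF q0 rs True s(1)]
    have c: "cls s N (TE q s r) (s - 1) (N - s)" "last (TE q s r) = N - 1" using t Nq by simp_all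
    note a = cls_append_run[OF c Nn(2,1)]
    have "s - 1 + (n - N) = s - 1 + \<sigma>" "N - s = n - s - \<sigma>" using n unfolding N_def by auto
    then show ?thesis using a by metis
  next
    case False
    show ?thesis
    proof (cases "r = 1")
      case True
      note t = T1_props[OF q0 s(1)] 
      have c: "cls s N (T1 q s) (s - 1) (N - s)" "last (T1 q s) = N - 1" using t Nq True s by simp_all
      note a = cls_append_run[OF c Nn(2,1)]
      have "s - 1 + (n - N) = s - 1 + \<sigma>" "N - s = n - s - \<sigma>" using n unfolding N_def by auto
      then show ?thesis using a by metis
    next
      case r1: False
      have sig: "\<sigma> \<ge> 1" using good False r1 unfolding r_def N_def by auto
      have r3: "r \<ge> 3" using False r1 by presburger
      define j where "j = r - 2"
      have jo: "odd j" using False r3 unfolding j_def by simp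
      have js: "j + 3 < s" using rs False s(1) r3 unfolding j_def by presburger
      note t = G1e_props[OF q0 jo js s(1)]
      have e: "q * s + (j + 3) = N + 1" using Nq r3 unfolding j_def by simp
      have c: "cls s (N + 1) (G1e q s j) s (N + 1 - s - 1)" "last (G1e q s j) = N + 1 - 1"
        using t unfolding e by simp_all
      have N1: "N + 1 > 0" "N + 1 \<le> n" using sig n unfolding N_def by auto
      note a = cls_append_run[OF c N1]
      have "s + (n - (N + 1)) = s - 1 + \<sigma>" "N + 1 - s - 1 = n - s - \<sigma>" using n sig s unfolding N_def by auto
      then show ?thesis using a by metis
    qed
  qed
qed

lemma upt_split3: "a \<le> b \<Longrightarrow> b \<le> c \<Longrightarrow> [a..<c] = [a..<b] @ [b..<c]"
  by (metis le_add_diff_inverse upt_add_eq_append)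

definition S1E_segs :: "nat \<Rightarrow> nat \<Rightarrow> nat \<Rightarrow> nat list list" where
  "S1E_segs q s \<rho> = map (\<lambda>j. cs q s \<rho> j (even j)) (rev [0..<\<rho>]) @ map (\<lambda>j. cs q s \<rho> j (odd j)) (rev [\<rho>..<s])"

definition S1O_segs :: "nat \<Rightarrow> nat \<Rightarrow> nat \<Rightarrow> nat list list" where
  "S1O_segs q s \<rho> = map (\<lambda>j. cs q s \<rho> j (even j)) [\<rho>..<s] @ map (\<lambda>j. cs q s \<rho> j (odd j)) [0..<\<rho> - 2]
     @ [[\<rho> - 2], col q s \<rho> (\<rho> - 1), rev (ap (\<rho> - 2 + s) s q)]"

lemma S1_props:
  assumes q: "q > 0" and r: "odd \<rho>" "\<rho> \<ge> 3" "\<rho> + 2 \<le> s" and s: "odd s"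
  shows "cls s (q * s + \<rho>) (concat (S1E_segs q s \<rho>)) (s - 1) (q * s + \<rho> - s)"
    "cls s (q * s + \<rho>) (concat (S1O_segs q s \<rho>)) s (q * s + \<rho> - s - 1)"
    "last (concat (S1E_segs q s \<rho>)) = hd (concat (S1O_segs q s \<rho>))"
proof -
  have m: "s * q \<ge> s" using sq_ge[OF q] .
  let ?EA = "map (\<lambda>j. cs q s \<rho> j (even j)) (rev [0..<\<rho>])"
  let ?EB = "map (\<lambda>j. cs q s \<rho> j (odd j)) (rev [\<rho>..<s])"
  let ?OA = "map (\<lambda>j. cs q s \<rho> j (even j)) [\<rho>..<s]"
  let ?OB = "map (\<lambda>j. cs q s \<rho> j (odd j)) [0..<\<rho> - 2]"
  let ?OC = "[[\<rho> - 2], col q s \<rho> (\<rho> - 1), rev (ap (\<rho> - 2 + s) s q)]"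
  have sgE: "seglist s (?EA @ ?EB)" using seglist_cs_map[OF q, of s \<rho> id] by (simp add: seglist_append)
  have sgO: "seglist s (?OA @ ?OB @ ?OC)"
    using seglist_cs_map[OF q, of s \<rho> id] q
    by (simp add: seglist_append seglist_Cons seg_ap col_ne col_def dl_ap dl_rev clen_pos, simp add: seglist_def)
  have chEA: "schain ?EA"
  proof (rule chain_map_rev_upt)
    fix i assume i: "0 \<le> i" "Suc i < \<rho>"
    show "nd (last (cs q s \<rho> (Suc i) (even (Suc i)))) (hd (cs q s \<rho> i (even i))) = 1"
    proof (cases "even i")
      case True then show ?thesis using q by (simp add: last_cs hd_cs)
    next
      case False
      have "ctop q s \<rho> (Suc i) = ctop q s \<rho> i + 1" using i by (simp add: top_long)
      then show ?thesis using False q by (simp add: last_cs hd_cs nd_def)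
    qed
  qed
  have chEB: "schain ?EB"
  proof (rule chain_map_rev_upt)
    fix i assume i: "\<rho> \<le> i" "Suc i < s"
    show "nd (last (cs q s \<rho> (Suc i) (odd (Suc i)))) (hd (cs q s \<rho> i (odd i))) = 1"
    proof (cases "even i")
      case True
      have t: "ctop q s \<rho> (Suc i) = Suc i + s * q - s" "ctop q s \<rho> i = i + s * q - s"
        using i by (auto simp: top_short)
      have "ctop q s \<rho> (Suc i) = ctop q s \<rho> i + 1" unfolding t using m by arith
      then show ?thesis using True q by (simp add: last_cs hd_cs nd_def)
    next
      case False then show ?thesis using q by (simp add: last_cs hd_cs)
    qed
  qed
  have EAne: "?EA \<noteq> []" using r by simp
  have lEA: "last (last ?EA) = s * q"
  proof -
    have "last (rev [0..<\<rho>]) = 0" using r by (simp add: last_rev)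
    then have "last ?EA = cs q s \<rho> 0 (even 0)" using EAne by (simp add: last_map)
    then show ?thesis using q r by (simp add: last_cs top_long)
  qed
  have hEA: "hd (hd ?EA) = \<rho> - 1"
  proof -
    have "rev [0..<\<rho>] = (\<rho> - 1) # rev [0..<\<rho> - 1]" using r by (cases \<rho>) auto
    moreover have "even (\<rho> - 1)" using r by simp
    ultimately show ?thesis using q by (simp add: hd_cs)
  qed
  have EBne: "?EB \<noteq> []" using r by simp
  have hEB: "hd (hd ?EB) = s * q - 1"
  proof -
    have "rev [\<rho>..<s] = (s - 1) # rev [\<rho>..<s - 1]" using r by (cases s) auto
    moreover have "even (s - 1)" using s by simp
    moreover have "ctop q s \<rho> (s - 1) = s * q - 1" using r m by (simp add: top_short)
    ultimately show ?thesis using q by (simp add: hd_cs)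
  qed
  have lEB: "last (last ?EB) = \<rho> + s * q - s"
  proof -
    have "last (rev [\<rho>..<s]) = \<rho>" using r by (simp add: last_rev)
    then have "last ?EB = cs q s \<rho> \<rho> (odd \<rho>)" using EBne by (simp add: last_map)
    then show ?thesis using q r by (simp add: last_cs top_short)
  qed
  have chE: "schain (?EA @ ?EB)"
  proof (rule chain_append[OF chEA chEB])
    have sqpos: "s * q > 0" using r q by simp
    have "nd (s * q) (s * q - 1) = 1" using sqpos by (cases "s * q") (auto simp: nd_def)
    then show "nd (last (last ?EA)) (hd (hd ?EB)) = 1" using lEA hEB by simp
  qed
  have jsE: "mset (rev [0..<\<rho>] @ rev [\<rho>..<s]) = mset [0..<s]"
    using upt_split3[of 0 \<rho> s] r by simp
  have msE: "mset (concat (?EA @ ?EB)) = mset [0..<q * s + \<rho>]"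
  proof -
    have "mset (concat (?EA @ ?EB)) = sum_list (map (\<lambda>i. mset (col q s \<rho> i)) (rev [0..<\<rho>] @ rev [\<rho>..<s]))"
      by (simp add: mset_concat_cs)
    also have "\<dots> = mset [0..<q * s + \<rho>]" by (rule cols_mset[OF jsE]) (use r in simp)
    finally show ?thesis .
  qed
  have lenE: "length (?EA @ ?EB) = s" using r by simp
  have cE: "cls s (q * s + \<rho>) (concat (?EA @ ?EB)) (length (?EA @ ?EB) - 1) (q * s + \<rho> - length (?EA @ ?EB))"
    by (rule cls_of_segs[OF chE sgE msE])
  show "cls s (q * s + \<rho>) (concat (S1E_segs q s \<rho>)) (s - 1) (q * s + \<rho> - s)"
    using cE unfolding S1E_segs_def lenE .
  have lastE: "last (concat (S1E_segs q s \<rho>)) = \<rho> + s * q - s"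
  proof -
    have "last (concat (?EA @ ?EB)) = last (last (?EA @ ?EB))"
      by (rule last_concat_gen[OF _ seglist_last_ne[OF sgE]]) (use EBne in simp_all)
    then show ?thesis unfolding S1E_segs_def using lEB EBne by simp
  qed
  have chOA: "schain ?OA"
  proof (rule chain_map_upt)
    fix i assume i: "\<rho> \<le> i" "Suc i < s"
    show "nd (last (cs q s \<rho> i (even i))) (hd (cs q s \<rho> (Suc i) (even (Suc i)))) = 1"
    proof (cases "even i")
      case True
      have t: "ctop q s \<rho> (Suc i) = Suc i + s * q - s" "ctop q s \<rho> i = i + s * q - s"
        using i by (auto simp: top_short)
      have "ctop q s \<rho> (Suc i) = ctop q s \<rho> i + 1" unfolding t using m by arith
      then show ?thesis using True q by (simp add: last_cs hd_cs nd_def)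
    next
      case False then show ?thesis using q by (simp add: last_cs hd_cs)
    qed
  qed
  have chOB: "schain ?OB"
  proof (rule chain_map_upt)
    fix i assume i: "0 \<le> i" "Suc i < \<rho> - 2"
    show "nd (last (cs q s \<rho> i (odd i))) (hd (cs q s \<rho> (Suc i) (odd (Suc i)))) = 1"
    proof (cases "odd i")
      case True
      have "ctop q s \<rho> (Suc i) = ctop q s \<rho> i + 1" using i by (simp add: top_long)
      then show ?thesis using True q by (simp add: last_cs hd_cs nd_def)
    next
      case False then show ?thesis using q by (simp add: last_cs hd_cs)
    qed
  qed
  have lap: "last (ap (\<rho> - 2 + s) s q) = \<rho> - 2 + s * q"
  proof -
    have "s + s * (q - 1) = s * q" using q by (cases q) auto
    then show ?thesis using q by (simp add: last_ap)
  qed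
  have chOC: "schain ?OC"
  proof -
    have "hd (col q s \<rho> (\<rho> - 1)) = \<rho> - 1" using q by (simp add: hd_col)
    moreover have "last (col q s \<rho> (\<rho> - 1)) = \<rho> - 1 + s * q" using q r by (simp add: last_col top_long)
    moreover have "hd (rev (ap (\<rho> - 2 + s) s q)) = \<rho> - 2 + s * q" using lap q by (simp add: hd_rev)
    moreover have "nd (\<rho> - 2) (\<rho> - 1) = 1" "nd (\<rho> - 1 + s * q) (\<rho> - 2 + s * q) = 1"
      using r by (auto simp: nd_def)
    ultimately show ?thesis by simp
  qed
  have OAne: "?OA \<noteq> []" using r by simp
  have OBne: "?OB \<noteq> []" using r by simp
  have lOA: "last (last ?OA) = s * q - 1"
  proof -
    have "last [\<rho>..<s] = s - 1" using r by simp
    then have "last ?OA = cs q s \<rho> (s - 1) (even (s - 1))" using OAne by (simp add: last_map)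
    moreover have "even (s - 1)" using s by simp
    moreover have "ctop q s \<rho> (s - 1) = s * q - 1" using r m by (simp add: top_short)
    ultimately show ?thesis using q by (simp add: last_cs)
  qed
  have hOB: "hd (hd ?OB) = s * q"
  proof -
    have "[0..<\<rho> - 2] = 0 # [1..<\<rho> - 2]" using r by (simp add: upt_conv_Cons)
    then show ?thesis using q r by (simp add: hd_cs top_long)
  qed
  have lOB: "last (last ?OB) = \<rho> - 3"
  proof -
    have l: "last [0..<\<rho> - 2] = \<rho> - 3" using r by simp
    have ne: "[0..<\<rho> - 2] \<noteq> []" using r by simp
    have e: "odd (\<rho> - 3) = False" using r by presburger
    have "last ?OB = cs q s \<rho> (\<rho> - 3) False" by (simp only: last_map[OF ne] l e)
    then show ?thesis using q by (simp add: last_cs)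
  qed
  have hOA: "hd (hd ?OA) = \<rho> + s * q - s"
  proof -
    have "[\<rho>..<s] = \<rho> # [Suc \<rho>..<s]" using r by (simp add: upt_conv_Cons)
    then show ?thesis using q r by (simp add: hd_cs top_short)
  qed
  have chOBC: "schain (?OB @ ?OC)"
  proof (rule chain_append[OF chOB chOC])
    have "\<rho> - 2 = Suc (\<rho> - 3)" using r by arith
    then have "nd (\<rho> - 3) (\<rho> - 2) = 1" by simp
    then show "nd (last (last ?OB)) (hd (hd ?OC)) = 1" using lOB by simp
  qed
  have chO: "schain (?OA @ ?OB @ ?OC)"
  proof (rule chain_append[OF chOA chOBC])
    have sqpos: "s * q > 0" using r q by simp
    have "nd (s * q - 1) (s * q) = 1" using sqpos by (cases "s * q") (auto simp: nd_def)
    then show "nd (last (last ?OA)) (hd (hd (?OB @ ?OC))) = 1" using lOA hOB OBne by simp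
  qed
  have jsO: "mset ([\<rho>..<s] @ [0..<\<rho> - 2] @ [\<rho> - 2, \<rho> - 1]) = mset [0..<s]"
  proof -
    have "[0..<\<rho>] = [0..<\<rho> - 2] @ [\<rho> - 2, \<rho> - 1]"
      using r upt_split3[of 0 "\<rho> - 2" \<rho>] by (simp add: upt_conv_Cons)
    then show ?thesis using upt_split3[of 0 \<rho> s] r by simp
  qed
  have msO: "mset (concat (?OA @ ?OB @ ?OC)) = mset [0..<q * s + \<rho>]"
  proof -
    have c2: "mset (col q s \<rho> (\<rho> - 2)) = add_mset (\<rho> - 2) (mset (ap (\<rho> - 2 + s) s q))"
      using r by (simp add: mset_col_long)
    have "mset (concat (?OA @ ?OB @ ?OC)) = sum_list (map (\<lambda>i. mset (col q s \<rho> i)) ([\<rho>..<s] @ [0..<\<rho> - 2] @ [\<rho> - 2, \<rho> - 1]))"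
      by (simp add: mset_concat_cs c2 ac_simps)
    also have "\<dots> = mset [0..<q * s + \<rho>]" by (rule cols_mset[OF jsO]) (use r in simp)
    finally show ?thesis .
  qed
  have lenO: "length (?OA @ ?OB @ ?OC) = s + 1" using r by simp
  have cO: "cls s (q * s + \<rho>) (concat (?OA @ ?OB @ ?OC)) (length (?OA @ ?OB @ ?OC) - 1) (q * s + \<rho> - length (?OA @ ?OB @ ?OC))"
    by (rule cls_of_segs[OF chO sgO msO])
  show "cls s (q * s + \<rho>) (concat (S1O_segs q s \<rho>)) s (q * s + \<rho> - s - 1)"
    using cO unfolding S1O_segs_def lenO by simp
  have "hd (concat (S1O_segs q s \<rho>)) = \<rho> + s * q - s"
  proof -
    have "hd (concat (?OA @ ?OB @ ?OC)) = hd (hd (?OA @ ?OB @ ?OC))"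
      by (rule hd_concat_gen[OF _ seglist_hd_ne[OF sgO]]) simp_all
    then show ?thesis unfolding S1O_segs_def using hOA OAne by simp
  qed
  then show "last (concat (S1E_segs q s \<rho>)) = hd (concat (S1O_segs q s \<rho>))" using lastE by simp
qed

definition TO_segs :: "nat \<Rightarrow> nat \<Rightarrow> nat \<Rightarrow> nat list list" where
  "TO_segs q s r = [cs q s r (s - 2) False, cs q s r (s - 1) True] @ map (\<lambda>j. cs q s r j (odd j)) [0..<s - 2]"

lemma TO_props:
  assumes q: "q > 0" and r: "odd r" "r + 2 \<le> s" and s: "odd s"
  shows "cls s (q * s + r) (concat (TO_segs q s r)) (s - 1) (q * s + r - s)"
    "hd (concat (TO_segs q s r)) = s * q - 2"
proof -
  have m: "s * q \<ge> s" using sq_ge[OF q] .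
  have s3: "s \<ge> 3" using r by (cases r) auto
  let ?H = "[cs q s r (s - 2) False, cs q s r (s - 1) True]"
  let ?R = "map (\<lambda>j. cs q s r j (odd j)) [0..<s - 2]"
  have sg: "seglist s (?H @ ?R)"
    using seglist_cs_map[OF q, of s r id] q by (simp add: seglist_append seglist_Cons seg_cs)
  have tsm2: "ctop q s r (s - 2) = s * q - 2" using r m s3 by (simp add: top_short)
  have tsm1: "ctop q s r (s - 1) = s * q - 1" using r m s3 by (simp add: top_short)
  have chH: "schain ?H"
  proof -
    have "s - 1 = Suc (s - 2)" using s3 by arith
    then have "nd (s - 2) (s - 1) = 1" by simp
    then show ?thesis using q by (simp add: last_cs hd_cs)
  qed
  have chR: "schain ?R"
  proof (rule chain_map_upt)
    fix i assume i: "0 \<le> i" "Suc i < s - 2"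
    show "nd (last (cs q s r i (odd i))) (hd (cs q s r (Suc i) (odd (Suc i)))) = 1"
    proof (cases "odd i")
      case True
      then have "Suc i \<noteq> r" using r by auto
      then show ?thesis using True q by (simp add: last_cs hd_cs nd_top_Suc)
    next
      case False then show ?thesis using q by (simp add: last_cs hd_cs)
    qed
  qed
  have Rne: "?R \<noteq> []" using s3 by simp
  have hR: "hd (hd ?R) = s * q"
  proof -
    have "[0..<s - 2] = 0 # [1..<s - 2]" using s3 by (simp add: upt_conv_Cons)
    moreover have "0 < r" using r by (cases r) auto
    ultimately show ?thesis using q by (simp add: hd_cs top_long)
  qed
  have ch: "schain (?H @ ?R)"
  proof (rule chain_append[OF chH chR])
    have sqpos: "s * q > 0" using s3 q by simp
    have "nd (s * q - 1) (s * q) = 1" using sqpos by (cases "s * q") (auto simp: nd_def)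
    then show "nd (last (last ?H)) (hd (hd ?R)) = 1" using hR q tsm1 by (simp add: last_cs)
  qed
  have js: "mset ([s - 2, s - 1] @ [0..<s - 2]) = mset [0..<s]"
  proof -
    have "[0..<s] = [0..<s - 2] @ [s - 2, s - 1]"
      using s3 upt_split3[of 0 "s - 2" s] by (simp add: upt_conv_Cons)
    then show ?thesis by simp
  qed
  have ms: "mset (concat (?H @ ?R)) = mset [0..<q * s + r]"
  proof -
    have "mset (concat (?H @ ?R)) = sum_list (map (\<lambda>i. mset (col q s r i)) ([s - 2, s - 1] @ [0..<s - 2]))"
      by (simp add: mset_concat_cs mset_cs)
    also have "\<dots> = mset [0..<q * s + r]" by (rule cols_mset[OF js]) (use r in simp)
    finally show ?thesis .
  qed
  have len: "length (?H @ ?R) = s" using s3 by simp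
  have c: "cls s (q * s + r) (concat (?H @ ?R)) (length (?H @ ?R) - 1) (q * s + r - length (?H @ ?R))"
    by (rule cls_of_segs[OF ch sg ms])
  show "cls s (q * s + r) (concat (TO_segs q s r)) (s - 1) (q * s + r - s)"
    using c unfolding TO_segs_def len .
  show "hd (concat (TO_segs q s r)) = s * q - 2"
    unfolding TO_segs_def using q tsm2 by (simp add: hd_cs cs_ne)
qed

lemma cls_rev: "cls s n p x y \<Longrightarrow> cls s n (rev p) x y"
  by (simp add: cls_def dl_rev)

lemma assemble:
  assumes E: "cls s nE pe xE yE" and O: "cls s nO po xO yO"
    and n: "nE = nO \<or> nE = Suc nO" "nO > 0"
    and link: "nd (2 * last pe) (2 * hd po + 1) = 1" and t: "t = 2 * s"
  shows "has_linear_realization (mset_12t (xE + xO) t (yE + yO))"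
proof -
  let ?p = "map (\<lambda>x. 2 * x) pe @ map (\<lambda>x. 2 * x + 1) po"
  have dE: "distinct pe" and sE: "set pe = {0..<nE}" and lE: "dl pe = replicate_mset xE 1 + replicate_mset yE s"
    using E by (auto simp: cls_def)
  have dO: "distinct po" and sO: "set po = {0..<nO}" and lO: "dl po = replicate_mset xO 1 + replicate_mset yO s"
    using O by (auto simp: cls_def)
  have cE: "xE + yE = nE - 1" using cls_count[OF E] .
  have cO: "xO + yO = nO - 1" using cls_count[OF O] .
  have lenE: "length pe = nE" using cls_length[OF E] .
  have lenO: "length po = nO" using cls_length[OF O] .
  have peN: "pe \<noteq> []" "po \<noteq> []" using n lenE lenO by auto
  have dist: "distinct ?p"
    using dE dO by (auto simp: distinct_map inj_on_def) presburger
  have set: "set ?p = {0..<nE + nO}"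
  proof
    show "set ?p \<subseteq> {0..<nE + nO}" using sE sO n by auto
    show "{0..<nE + nO} \<subseteq> set ?p"
    proof
      fix z assume z: "z \<in> {0..<nE + nO}"
      show "z \<in> set ?p"
      proof (cases "even z")
        case True
        have z': "z < nE + nO" using z by simp
        have "z = 2 * (z div 2)" using True by simp
        moreover have "z div 2 < nE" using z' n True by presburger
        ultimately have "z \<in> (\<lambda>x. 2 * x) ` set pe" using sE by (auto intro!: image_eqI[where x="z div 2"])
        then show ?thesis by simp
      next
        case False
        have z': "z < nE + nO" using z by simp
        have "z = 2 * (z div 2) + 1" using False by simp
        moreover have "z div 2 < nO" using z' n False by presburger
        ultimately have "z \<in> (\<lambda>x. 2 * x + 1) ` set po" using sO by (auto intro!: image_eqI[where x="z div 2"])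
        then show ?thesis by simp
      qed
    qed
  qed
  have dmE: "dl (map (\<lambda>x. 2 * x) pe) = image_mset ((*) 2) (dl pe)"
    by (rule dl_map) (auto simp: nd_def)
  have dmO: "dl (map (\<lambda>x. 2 * x + 1) po) = image_mset ((*) 2) (dl po)"
    by (rule dl_map) (auto simp: nd_def)
  have "dl ?p = dl (map (\<lambda>x. 2 * x) pe) + dl (map (\<lambda>x. 2 * x + 1) po) + {#nd (last (map (\<lambda>x. 2 * x) pe)) (hd (map (\<lambda>x. 2 * x + 1) po))#}"
    by (rule dl_append) (use peN in auto)
  also have "\<dots> = replicate_mset (xE + xO) 2 + replicate_mset (yE + yO) t + {#1#}"
    using link peN unfolding dmE dmO lE lO t by (simp add: last_map hd_map replicate_mset_add ac_simps numeral_2_eq_2)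
  finally have dlp: "dl ?p = mset_12t (xE + xO) t (yE + yO)" unfolding mset_12t_def by (simp add: ac_simps)
  have sz: "size (mset_12t (xE + xO) t (yE + yO)) + 1 = nE + nO"
    unfolding mset_12t_def using cE cO n by auto
  have "linear_realization (mset_12t (xE + xO) t (yE + yO)) ?p"
    unfolding linear_realization_def diff_mset_dl using dist set dlp sz lenE lenO
    by (simp add: sz[symmetric])
  then show ?thesis unfolding has_linear_realization_def by blast
qed

lemma case_big:
  assumes s: "odd s" "s \<ge> 3" and c: "odd c" and sig: "b \<ge> 2 * s"
  shows "has_linear_realization (mset_12t b (2 * s) c)"
proof -
  define v where "v = b + c + 2"
  define nE where "nE = (v + 1) div 2"
  define nO where "nO = v div 2"
  define \<sigma> where "\<sigma> = b + 2 - 2 * s"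
  define \<sigma>E where "\<sigma>E = \<sigma> div 2"
  define \<sigma>O where "\<sigma>O = \<sigma> - \<sigma>E"
  have c1: "c \<ge> 1" using c by (cases c) auto
  have sE: "\<sigma>E \<ge> 1" "\<sigma>O \<ge> 1" using sig unfolding \<sigma>E_def \<sigma>O_def \<sigma>_def by auto
  have v: "v = \<sigma> + 2 * s + c" using sig unfolding v_def \<sigma>_def by simp
  have e1: "2 * nE = v \<or> 2 * nE = v + 1" unfolding nE_def by presburger
  have e2: "2 * nO = v \<or> 2 * nO + 1 = v" unfolding nO_def by presburger
  have e3: "2 * \<sigma>E = \<sigma> \<or> 2 * \<sigma>E + 1 = \<sigma>" unfolding \<sigma>E_def by presburger
  have e4: "\<sigma>O = \<sigma> - \<sigma>E" by (simp add: \<sigma>O_def)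
  have nEb: "nE \<ge> s + \<sigma>E" using e1 e3 v c1 by linarith
  have nOb: "nO \<ge> s + \<sigma>O" using e2 e3 e4 v c1 by linarith
  obtain pe where pe: "cls s nE pe (s - 1 + \<sigma>E) (nE - s - \<sigma>E)" "pe \<noteq> []" "last pe = nE - 1"
    using topend[OF s nEb] sE by blast
  obtain po where po: "cls s nO po (s - 1 + \<sigma>O) (nO - s - \<sigma>O)" "po \<noteq> []" "last po = nO - 1"
    using topend[OF s nOb] sE by blast
  have n: "nE = nO \<or> nE = Suc nO" "nO > 0" using nOb s e1 e2 by auto
  have link: "nd (2 * last pe) (2 * hd (rev po) + 1) = 1"
    using pe(3) po(2,3) n by (auto simp: hd_rev nd_def)
  have "has_linear_realization (mset_12t ((s - 1 + \<sigma>E) + (s - 1 + \<sigma>O)) (2 * s) ((nE - s - \<sigma>E) + (nO - s - \<sigma>O)))"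
    by (rule assemble[OF pe(1) cls_rev[OF po(1)] n link refl])
  moreover have "(s - 1 + \<sigma>E) + (s - 1 + \<sigma>O) = b" using e3 e4 sig s \<sigma>_def by linarith
  moreover have "(nE - s - \<sigma>E) + (nO - s - \<sigma>O) = c"
    using nEb nOb e1 e2 e3 e4 v by linarith
  ultimately show ?thesis by simp
qed


lemma case_one:
  assumes s: "odd s" "s \<ge> 3" and c: "odd c" and b: "b = 2 * s - 1"
  shows "has_linear_realization (mset_12t b (2 * s) c)"
proof -
  define n where "n = (b + c + 2) div 2"
  have c1: "c \<ge> 1" using c by (cases c) auto
  have n2: "2 * n = b + c + 2" unfolding n_def using b c s by presburger
  have ns: "n \<ge> s + 1" using n2 b c1 s by linarith
  define q where "q = n div s"
  define \<rho> where "\<rho> = n mod s"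
  have s0: "s > 0" using s by simp
  have nq: "n = q * s + \<rho>" unfolding q_def \<rho>_def by simp
  have q0: "q > 0" unfolding q_def using ns s0 by (simp add: div_greater_zero_iff)
  have \<rho>s: "\<rho> < s" unfolding \<rho>_def using s0 by simp
  show ?thesis
  proof (cases "even \<rho> \<or> \<rho> = 1")
    case True
    have g0: "0 \<ge> 1 \<or> even ((n - 0) mod s) \<or> (n - 0) mod s = 1" using True unfolding \<rho>_def by simp
    obtain pe where pe: "cls s n pe (s - 1 + 0) (n - s - 0)" "pe \<noteq> []" "last pe = n - 1"
      using topend[OF s _ g0] ns by auto
    obtain po where po: "cls s n po (s - 1 + 1) (n - s - 1)" "po \<noteq> []" "last po = n - 1"
      using topend[OF s, where n=n and \<sigma>=1] ns by auto
    have link: "nd (2 * last pe) (2 * hd (rev po) + 1) = 1"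
      using pe(3) po(2,3) by (auto simp: hd_rev nd_def)
    have "has_linear_realization (mset_12t ((s - 1 + 0) + (s - 1 + 1)) (2 * s) ((n - s - 0) + (n - s - 1)))"
      by (rule assemble[OF pe(1) cls_rev[OF po(1)] _ _ link refl]) (use ns in auto)
    moreover have "(s - 1 + 0) + (s - 1 + 1) = b" using b s by simp
    moreover have "(n - s - 0) + (n - s - 1) = c" using n2 b ns s(2) by linarith
    ultimately show ?thesis by simp
  next
    case False
    have r: "odd \<rho>" "\<rho> \<ge> 3" "\<rho> + 2 \<le> s" using False \<rho>s s by presburger+
    note S = S1_props[OF q0 r s(1)]
    have "has_linear_realization (mset_12t ((s - 1) + s) (2 * s) ((q * s + \<rho> - s) + (q * s + \<rho> - s - 1)))"
    proof (rule assemble[OF S(1) S(2) _ _ _ refl])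
      show "q * s + \<rho> = q * s + \<rho> \<or> q * s + \<rho> = Suc (q * s + \<rho>)" by simp
      show "q * s + \<rho> > 0" using r by simp
      show "nd (2 * last (concat (S1E_segs q s \<rho>))) (2 * hd (concat (S1O_segs q s \<rho>)) + 1) = 1"
        using S(3) by (simp add: nd_def)
    qed
    moreover have "(s - 1) + s = b" using b s by simp
    moreover have "(q * s + \<rho> - s) + (q * s + \<rho> - s - 1) = c" using n2 b ns nq s(2) by linarith
    ultimately show ?thesis by simp
  qed
qed

lemma case_zero:
  assumes s: "odd s" "s \<ge> 3" and c: "odd c" and b: "b = 2 * s - 2"
    and d: "(c mod (2 * s)) mod 4 = 3"
  shows "has_linear_realization (mset_12t b (2 * s) c)"
proof -
  define d where "d = c mod (2 * s)"
  define k where "k = c div (2 * s)"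
  have s0: "s > 0" using s by simp
  have ck: "c = 2 * s * k + d" unfolding d_def k_def by simp
  have d4: "d mod 4 = 3" using d unfolding d_def .
  have dlt: "d < 2 * s" unfolding d_def using s0 by simp
  obtain m where m: "s = 2 * m + 1" using s(1) by (auto elim: oddE)
  have od: "odd d" using d4 by (metis dvd_mod_iff even_numeral mod_mod_cancel odd_numeral dvd_refl) 
  obtain e where e: "d = 2 * e + 1" using od by (auto elim: oddE)
  have e4: "e mod 2 = 1" using d4 e by (simp add: mod_mult_right_eq) presburger
  have d3: "d + 3 \<le> 2 * s"
  proof -
    have "d \<noteq> 2 * s - 1"
    proof
      assume "d = 2 * s - 1"
      then have "e = 2 * m" using e m by simp
      then show False using e4 by simp
    qed
    then have "e \<noteq> 2 * m" using e m by auto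
    moreover have "e \<le> 2 * m" using dlt e m by linarith
    ultimately have "e + 1 \<le> 2 * m" by linarith
    then show ?thesis using e m by linarith
  qed
  define rE where "rE = e + 1"
  define rO where "rO = e"
  define q where "q = k + 1"
  have rE2: "2 * rE = d + 1" unfolding rE_def using e by simp
  have rO2: "rE = rO + 1" unfolding rE_def rO_def by simp
  have rEe: "even rE" unfolding rE_def using e4 by presburger
  have rEs: "rE < s" using rE2 d3 by linarith
  have rOo: "odd rO" using rEe rO2 by simp
  have rOs: "rO + 2 \<le> s" using rEs rO2 by simp
  have q0: "q > 0" unfolding q_def by simp
  note BE = B_props[OF q0 rEs rEe s(1)]
  note TO = TO_props[OF q0 rOo rOs s(1)]
  have sq: "s * q \<ge> 3" using s q0 sq_ge[OF q0, of s] by linarith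
  have "has_linear_realization (mset_12t ((s - 1) + (s - 1)) (2 * s) ((q * s + rE - s) + (q * s + rO - s)))"
  proof (rule assemble[OF BE(1) TO(1) _ _ _ refl])
    show "q * s + rE = q * s + rO \<or> q * s + rE = Suc (q * s + rO)" using rO2 by simp
    show "q * s + rO > 0" using q0 s0 by simp
    have "2 * (s * q - 1) = Suc (2 * (s * q - 2) + 1)" using sq by arith
    then show "nd (2 * last (B q s rE)) (2 * hd (concat (TO_segs q s rO)) + 1) = 1"
      using BE(3) TO(2) by simp
  qed
  moreover have "(s - 1) + (s - 1) = b" using b s by simp
  moreover have "(q * s + rE - s) + (q * s + rO - s) = c"
  proof -
    have "q * s = k * s + s" unfolding q_def by simp
    then show ?thesis using ck rE2 rO2 s0 by (simp add: algebra_simps)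
  qed
  ultimately show ?thesis by simp
qed


theorem proposition3p11:
  fixes t c :: nat
  assumes "t \<ge> 6" and "t mod 4 = 2"
    and "c > 0" and "odd c"
  shows "((c mod t) mod 4 = 1 \<longrightarrow> (\<forall>b \<ge> t - 1. has_linear_realization (mset_12t b t c))) \<and>
         ((c mod t) mod 4 = 3 \<longrightarrow> (\<forall>b \<ge> t - 2. has_linear_realization (mset_12t b t c)))"
proof -
  define s where "s = t div 2"
  have so: "odd s" using assms(2) unfolding s_def by presburger
  have s3: "s \<ge> 3" using assms(1) unfolding s_def by simp
  have ts: "t = 2 * s" using assms(2) unfolding s_def by presburger
  have gen: "has_linear_realization (mset_12t b t c)"
    if b: "b \<ge> 2 * s - 2" and d: "b = 2 * s - 2 \<Longrightarrow> (c mod t) mod 4 = 3" for b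
  proof -
    consider "b \<ge> 2 * s" | "b = 2 * s - 1" | "b = 2 * s - 2" using b s3 by linarith
    then show ?thesis
    proof cases
      case 1 then show ?thesis using case_big[OF so s3 assms(4)] ts by simp
    next
      case 2 then show ?thesis using case_one[OF so s3 assms(4)] ts by simp
    next
      case 3 then show ?thesis using case_zero[OF so s3 assms(4) 3] d ts by simp
    qed
  qed
  show ?thesis
  proof (intro conjI impI allI)
    fix b assume "b \<ge> t - 1"
    then show "has_linear_realization (mset_12t b t c)" using ts s3 by (intro gen) auto
  next
    fix b assume "(c mod t) mod 4 = 3" "b \<ge> t - 2"
    then show "has_linear_realization (mset_12t b t c)" using ts by (intro gen) auto
  qed
qed

end
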